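(* Let $2\le j\le n$ and let $K_j\subset\wedge^j\mathbb{R}^n$ be a proper cone. Suppose there exists a basis $e_1',\ldots,e_n'$ of $\mathbb{R}^n$ such that $K_j\subseteq K_j'$, where $K_j'\subset\wedge^j\mathbb{R}^n$ is an exterior basic cone defined by this basis. Then the set $T(K_j)$, if it is nonempty, is a cone of rank $j$ in $\mathbb{R}^n$.
   Context: A proper cone is a closed convex cone that is pointed and solid. $\wedge^j\mathbb{R}^n$ is the $j$th exterior power of $\mathbb{R}^n$. An exterior basic cone defined by a basis $e_1',\ldots,e_n'$ is a cone in $\wedge^j\mathbb{R}^n$ spanned (as nonnegative linear combinations) by vectors $\sigma_{i_1\ldots i_j}\,(e'_{i_1}\wedge\cdots\wedge e'_{i_j})$, $1\le i_1<\cdots<i_j\le n$, where each sign $\sigma_{i_1\ldots i_j}\in\{1,-1\}$ is fixed. $T(K_j)$ is the closure of the set of all $x_1\in\mathbb{R}^n$ for which there exist $x_2,\ldots,x_j\in\mathbb{R}^n$ with $x_1\wedge\cdots\wedge x_j\in\operatorname{int}(K_j)\cup\operatorname{int}(-K_j)$. A closed subset $T\subset\mathbb{R}^n$ is a cone of rank $k$ if $\alpha x\in T$ for all $x\in T$, $\alpha\in\mathbb{R}$, and $T$ contains at least one $k$-dimensional linear subspace but no linear subspace of dimension greater than $k$. *)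

theory Defs
  imports "HOL-Analysis.Analysis"
begin

text \<open>Model of R^n: the type real^'n, with n = CARD('n); the linear order on 'n
  gives the ordering e_1,...,e_n of coordinates.  Model of the j-th exterior power:
  a subspace of real^('n set); the coordinate of a j-vector at a j-subset I is its
  Pluecker coordinate with respect to the standard basis e_I = e_{i_1} wedge ... wedge e_{i_j}.\<close>

definition det_nat :: "nat \<Rightarrow> (nat \<Rightarrow> nat \<Rightarrow> real) \<Rightarrow> real" where
  "det_nat j M = (\<Sum>p\<in>{p. p permutes {..<j}}. of_int (sign p) * (\<Prod>a<j. M a (p a)))"

definition wedge :: "nat \<Rightarrow> (nat \<Rightarrow> real^'n::{finite,linorder}) \<Rightarrow> real^('n set)" where
  "wedge j x = (\<chi> I. if card I = j
      then det_nat j (\<lambda>a b. x a $ (sorted_list_of_set I ! b)) else 0)"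

definition ext_power :: "nat \<Rightarrow> (real^('n::{finite,linorder} set)) set" where
  "ext_power j = span (range (wedge j :: (nat \<Rightarrow> real^'n::{finite,linorder}) \<Rightarrow> _))"

definition int_in :: "'a::metric_space set \<Rightarrow> 'a set \<Rightarrow> 'a set" where
  "int_in W K = {x\<in>K. \<exists>e>0. \<forall>y\<in>W. dist y x < e \<longrightarrow> y \<in> K}"

definition proper_cone_in :: "'a::real_normed_vector set \<Rightarrow> 'a set \<Rightarrow> bool" where
  "proper_cone_in W K \<longleftrightarrow> K \<subseteq> W \<and> closed K \<and> convex K \<and> cone K
     \<and> K \<inter> uminus ` K \<subseteq> {0} \<and> int_in W K \<noteq> {}"

definition is_basis :: "('n::finite \<Rightarrow> real^'n) \<Rightarrow> bool" where
  "is_basis e \<longleftrightarrow> inj e \<and> independent (range e)"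

definition ext_basic_cone ::
  "nat \<Rightarrow> ('n \<Rightarrow> real^'n::{finite,linorder}) \<Rightarrow> ('n set \<Rightarrow> real) \<Rightarrow> (real^('n::{finite,linorder} set)) set" where
  "ext_basic_cone j e s =
     {\<Sum>I\<in>{I. card I = j}. c I *\<^sub>R (s I *\<^sub>R wedge j (\<lambda>a. e (sorted_list_of_set I ! a)))
        | c. \<forall>I. c I \<ge> 0}"

definition is_ext_basic_cone :: "nat \<Rightarrow> (real^('n::{finite,linorder} set)) set \<Rightarrow> bool" where
  "is_ext_basic_cone j C \<longleftrightarrow> (\<exists>e s. is_basis e \<and> (\<forall>I. s I \<in> {1, -1}) \<and> C = ext_basic_cone j e s)"

definition T_set :: "nat \<Rightarrow> (real^('n::{finite,linorder} set)) set \<Rightarrow> (real^'n::{finite,linorder}) set" where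
  "T_set j K = closure {x1. \<exists>x. x 0 = x1 \<and>
      wedge j x \<in> int_in (ext_power j) K \<union> int_in (ext_power j) (uminus ` K)}"

definition cone_of_rank :: "nat \<Rightarrow> 'a::euclidean_space set \<Rightarrow> bool" where
  "cone_of_rank k T \<longleftrightarrow> closed T \<and> (\<forall>x\<in>T. \<forall>\<alpha>::real. \<alpha> *\<^sub>R x \<in> T)
     \<and> (\<exists>L. subspace L \<and> dim L = k \<and> L \<subseteq> T)
     \<and> (\<forall>L. subspace L \<and> L \<subseteq> T \<longrightarrow> dim L \<le> k)"

end

theory Submission
  imports Defs "Jordan_Normal_Form.Determinant"
begin

no_notation Matrix.vec_index (infixl "$" 100)

abbreviation ls :: "'a::linorder set \<Rightarrow> 'a list" where "ls I \<equiv> sorted_list_of_set I"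

lemma det_nat_jnf: "det_nat j M = det (mat j j (\<lambda>(a,b). M a b))"
  unfolding det_nat_def det_def by (simp add: atLeast0LessThan)

lemma det_nat_cong: assumes "\<And>a b. a < j \<Longrightarrow> b < j \<Longrightarrow> M a b = N a b"
  shows "det_nat j M = det_nat j N"
  unfolding det_nat_jnf by (rule arg_cong[where f=det]) (auto simp: assms)

lemma det_nat_identical_rows: assumes "i \<noteq> k" "i < j" "k < j" "\<And>b. b < j \<Longrightarrow> M i b = M k b"
  shows "det_nat j M = 0"
  unfolding det_nat_jnf
  by (rule det_identical_rows[of _ j i k]) (auto intro!: eq_vecI simp: assms)

lemma det_nat_transpose: "det_nat j (\<lambda>a b. M b a) = det_nat j M"
proof -
  have "det_nat j (\<lambda>a b. M b a) = det (transpose_mat (mat j j (\<lambda>(a,b). M a b)))"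
    unfolding det_nat_jnf by (rule arg_cong[where f=det]) auto
  also have "\<dots> = det_nat j M" unfolding det_nat_jnf by (rule det_transpose) auto
  finally show ?thesis .
qed

lemma det_nat_identical_cols: assumes "i \<noteq> k" "i < j" "k < j" "\<And>a. a < j \<Longrightarrow> M a i = M a k"
  shows "det_nat j M = 0"
  using det_nat_identical_rows[of i k j "\<lambda>a b. M b a"] assms det_nat_transpose[of j M] by simp

lemma det_nat_permute_rows: assumes "p permutes {..<j}"
  shows "det_nat j (\<lambda>a b. N (p a) b) = of_int (sign p) * det_nat j N"
proof -
  have p: "p permutes {0..<j}" using assms by (simp add: atLeast0LessThan)
  have pj: "\<And>i. i < j \<Longrightarrow> p i < j" using permutes_in_image[OF assms] by auto
  have "det_nat j (\<lambda>a b. N (p a) b) = det (mat j j (\<lambda>(i,k). (mat j j (\<lambda>(a,b). N a b)) $$ (p i, k)))"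
    unfolding det_nat_jnf
    by (rule arg_cong[where f=det], rule eq_matI) (auto simp: pj)
  also have "\<dots> = of_int (sign p) * det_nat j N"
    unfolding det_nat_jnf by (rule det_permute_rows[OF _ p]) auto
  finally show ?thesis .
qed

lemma det_nat_row_sum: assumes "i < j" "finite S"
  shows "det_nat j (\<lambda>a b. if a = i then (\<Sum>l\<in>S. g l * N l b) else M a b)
    = (\<Sum>l\<in>S. g l * det_nat j (\<lambda>a b. if a = i then N l b else M a b))"
proof -
  have pr: "\<And>F. (\<Prod>a<j. F a) = F i * (\<Prod>a\<in>{..<j}-{i}. F a)" for F :: "nat \<Rightarrow> real"
    using assms(1) by (simp add: prod.remove)
  have "det_nat j (\<lambda>a b. if a = i then (\<Sum>l\<in>S. g l * N l b) else M a b)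
    = (\<Sum>p\<in>{p. p permutes {..<j}}. \<Sum>l\<in>S. g l * (of_int (sign p) * ((N l (p i)) * (\<Prod>a\<in>{..<j}-{i}. M a (p a)))))"
    unfolding det_nat_def
    apply (rule sum.cong[OF refl])
    apply (subst pr)
    apply (simp add: sum_distrib_left sum_distrib_right mult_ac)
    done
  also have "\<dots> = (\<Sum>l\<in>S. g l * det_nat j (\<lambda>a b. if a = i then N l b else M a b))"
    unfolding det_nat_def
    apply (subst sum.swap)
    apply (rule sum.cong[OF refl])
    apply (subst sum_distrib_left)
    apply (rule sum.cong[OF refl])
    apply (subst pr)
    apply simp
    done
  finally show ?thesis .
qed

lemma det_nat_zero_row: assumes "i < j" "\<And>b. b < j \<Longrightarrow> M i b = 0"
  shows "det_nat j M = 0"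
  unfolding det_nat_def
proof (rule sum.neutral, intro ballI)
  fix p assume "p \<in> {p. p permutes {..<j}}"
  hence "p i < j" using permutes_in_image assms(1) by fastforce
  hence "(\<Prod>a<j. M a (p a)) = 0" using assms by (intro prod_zero) auto
  thus "of_int (sign p) * (\<Prod>a<j. M a (p a)) = 0" by simp
qed

lemma det_nat_id: "det_nat j (\<lambda>a b. if a = b then 1 else 0) = 1"
proof -
  have "det_nat j (\<lambda>a b. if a = b then 1 else 0) = det (1\<^sub>m j :: real mat)"
    unfolding det_nat_jnf one_mat_def by (rule arg_cong[where f=det]) auto
  thus ?thesis by simp
qed

lemma det_nat_laplace: "det_nat (Suc j) M =
   (\<Sum>a<Suc j. (-1)^a * M 0 a * det_nat j (\<lambda>b' a'. M (Suc b') (if a' < a then a' else Suc a')))"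
proof -
  let ?A = "mat (Suc j) (Suc j) (\<lambda>(a,b). M a b)"
  have "det ?A = (\<Sum>a<Suc j. ?A $$ (0,a) * cofactor ?A 0 a)"
    by (rule laplace_expansion_row) auto
  also have "\<dots> = (\<Sum>a<Suc j. (-1)^a * M 0 a * det_nat j (\<lambda>b' a'. M (Suc b') (if a' < a then a' else Suc a')))"
  proof (rule sum.cong[OF refl])
    fix a assume a: "a \<in> {..<Suc j}"
    have "mat_delete ?A 0 a = mat j j (\<lambda>(b',a'). M (Suc b') (if a' < a then a' else Suc a'))"
      unfolding mat_delete_def by (rule eq_matI) auto
    thus "?A $$ (0,a) * cofactor ?A 0 a = (-1)^a * M 0 a * det_nat j (\<lambda>b' a'. M (Suc b') (if a' < a then a' else Suc a'))"
      using a unfolding cofactor_def det_nat_jnf by simp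
  qed
  finally show ?thesis unfolding det_nat_jnf .
qed



lemma ls_props: fixes I :: "'a::{finite,linorder} set"
  shows "length (ls I) = card I" "distinct (ls I)" "set (ls I) = I"
  by auto

definition pos :: "'a list \<Rightarrow> 'a \<Rightarrow> nat" where
  "pos xs x = (THE i. i < length xs \<and> xs ! i = x)"

lemma pos_nth: "distinct xs \<Longrightarrow> i < length xs \<Longrightarrow> pos xs (xs ! i) = i"
  unfolding pos_def by (rule the_equality) (auto simp: nth_eq_iff_index_eq)

lemma pos_in: assumes "distinct xs" "x \<in> set xs"
  shows "pos xs x < length xs" "xs ! pos xs x = x"
proof -
  obtain i where i: "i < length xs" "xs ! i = x" using assms(2) by (auto simp: in_set_conv_nth)
  have "pos xs x = i" using pos_nth[OF assms(1) i(1)] i(2) by simp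
  thus "pos xs x < length xs" "xs ! pos xs x = x" using i by auto
qed

lemma cb_bij:
  fixes I :: "'n::{finite,linorder} set"
  assumes I: "card I = j" and p: "p permutes {..<j}"
  shows "(\<lambda>a. ls I ! p a) ` {..<j} = I"
    "\<And>a. a < j \<Longrightarrow> pos (ls I) (ls I ! p a) = p a"
    "inj_on (\<lambda>a. ls I ! p a) {..<j}"
proof -
  have len: "length (ls I) = j" using I by simp
  have pim: "p ` {..<j} = {..<j}" using permutes_image[OF p] .
  have pj: "\<And>a. a < j \<Longrightarrow> p a < j" using permutes_in_image[OF p] by auto
  have "(\<lambda>a. ls I ! p a) ` {..<j} = (\<lambda>a. ls I ! a) ` (p ` {..<j})" by auto
  also have "\<dots> = set (ls I)" unfolding pim using len by (auto simp: set_conv_nth)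
  finally show "(\<lambda>a. ls I ! p a) ` {..<j} = I" by simp
  show "a < j \<Longrightarrow> pos (ls I) (ls I ! p a) = p a" for a
    using len pj by (simp add: pos_nth)
  show "inj_on (\<lambda>a. ls I ! p a) {..<j}"
  proof (rule inj_onI)
    fix a b assume ab: "a \<in> {..<j}" "b \<in> {..<j}" "ls I ! p a = ls I ! p b"
    hence "p a = p b" using len pj by (simp add: nth_eq_iff_index_eq)
    thus "a = b" using permutes_inj[OF p] by (auto dest: injD)
  qed
qed

lemma cb_inv:
  fixes g :: "nat \<Rightarrow> 'n::{finite,linorder}"
  assumes g: "inj_on g {..<j}"
  defines "I \<equiv> g ` {..<j}"
  defines "q \<equiv> (\<lambda>a. if a < j then pos (ls I) (g a) else a)"
  shows "card I = j" "q permutes {..<j}" "\<And>a. a < j \<Longrightarrow> ls I ! q a = g a"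
proof -
  show cI: "card I = j" unfolding I_def using card_image[OF g] by simp
  have sI: "set (ls I) = I" by simp
  show "ls I ! q a = g a" if "a < j" for a
    using that pos_in[of "ls I" "g a"] unfolding q_def by (simp add: I_def)
  show "q permutes {..<j}"
  proof (rule inj_on_nat_permutes)
    show "inj_on q {..<j}"
    proof (rule inj_onI)
      fix a b assume ab: "a \<in> {..<j}" "b \<in> {..<j}" "q a = q b"
      hence "pos (ls I) (g a) = pos (ls I) (g b)" unfolding q_def by auto
      moreover have "g a \<in> set (ls I)" "g b \<in> set (ls I)" using ab unfolding I_def by auto
      ultimately have "g a = g b" by (metis pos_in(2) distinct_sorted_list_of_set)
      thus "a = b" using g ab by (auto dest: inj_onD)
    qed
    show "q \<in> {..<j} \<rightarrow> {..<j}"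
    proof
      fix a assume "a \<in> {..<j}"
      hence "g a \<in> set (ls I)" unfolding I_def by auto
      hence "pos (ls I) (g a) < length (ls I)" using pos_in(1)[of "ls I" "g a"] by simp
      thus "q a \<in> {..<j}" using cI \<open>a \<in> {..<j}\<close> unfolding q_def by simp
    qed
  qed (auto simp: q_def)
qed

lemma cauchy_binet:
  fixes X :: "nat \<Rightarrow> 'n::{finite,linorder} \<Rightarrow> real" and Y :: "'n \<Rightarrow> nat \<Rightarrow> real"
  shows "det_nat j (\<lambda>a b. \<Sum>m\<in>UNIV. X a m * Y m b)
     = (\<Sum>I\<in>{I. card I = j}. det_nat j (\<lambda>a b. X a (ls I ! b)) * det_nat j (\<lambda>a b. Y (ls I ! a) b))"
proof -
  define G where "G = PiE {..<j} (\<lambda>_. (UNIV::'n set))"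
  define H where "H = (\<lambda>g. (\<Prod>a<j. X a (g a)) * det_nat j (\<lambda>a b. Y (g a) b))"
  define P where "P = {p. p permutes {..<j}}"
  define J where "J = {I::'n set. card I = j}"
  define Gi where "Gi = {g\<in>G. inj_on g {..<j}}"
  have finG: "finite G" unfolding G_def by (simp add: finite_PiE)
  have step1: "det_nat j (\<lambda>a b. \<Sum>m\<in>UNIV. X a m * Y m b) = (\<Sum>g\<in>G. H g)"
  proof -
    have "det_nat j (\<lambda>a b. \<Sum>m\<in>UNIV. X a m * Y m b) = (\<Sum>p\<in>P. \<Sum>g\<in>G. of_int (sign p) * ((\<Prod>a<j. X a (g a)) * (\<Prod>a<j. Y (g a) (p a))))"
      unfolding det_nat_def G_def P_def
      by (rule sum.cong[OF refl]) (simp add: prod_sum_PiE sum_distrib_left prod.distrib)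
    also have "\<dots> = (\<Sum>g\<in>G. H g)"
      unfolding H_def det_nat_def P_def
      by (subst sum.swap) (simp add: sum_distrib_left mult_ac)
    finally show ?thesis .
  qed
  have step2: "(\<Sum>g\<in>G. H g) = (\<Sum>g\<in>Gi. H g)"
  proof (rule sum.mono_neutral_right[OF finG])
    show "Gi \<subseteq> G" unfolding Gi_def by auto
    show "\<forall>g\<in>G - Gi. H g = 0"
    proof
      fix g assume "g \<in> G - Gi"
      then obtain a b where ab: "a < j" "b < j" "a \<noteq> b" "g a = g b"
        unfolding Gi_def inj_on_def by auto
      have "det_nat j (\<lambda>a b. Y (g a) b) = 0"
        by (rule det_nat_identical_rows[OF ab(3) ab(1) ab(2)]) (simp add: ab(4))
      thus "H g = 0" unfolding H_def by simp
    qed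
  qed
  have step3: "(\<Sum>g\<in>Gi. H g) = (\<Sum>(I,p)\<in>Sigma J (\<lambda>_. P). H (restrict (\<lambda>a. ls I ! p a) {..<j}))"
  proof (rule sum.reindex_bij_witness[symmetric,
        where j = "\<lambda>(I,p). restrict (\<lambda>a. ls I ! p a) {..<j}"
          and i = "\<lambda>g. (g ` {..<j}, \<lambda>a. if a < j then pos (ls (g ` {..<j})) (g a) else a)"])
    fix Ip assume "Ip \<in> Sigma J (\<lambda>_. P)"
    then obtain I p where Ip: "Ip = (I,p)" "card I = j" "p permutes {..<j}"
      unfolding J_def P_def by auto
    note b = cb_bij[OF Ip(2) Ip(3)]
    have im: "restrict (\<lambda>a. ls I ! p a) {..<j} ` {..<j} = I" by (simp only: image_restrict_eq b(1))
    have pe: "(\<lambda>a. if a < j then pos (ls I) (restrict (\<lambda>a. ls I ! p a) {..<j} a) else a) = p"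
    proof
      fix a show "(if a < j then pos (ls I) (restrict (\<lambda>a. ls I ! p a) {..<j} a) else a) = p a"
      proof (cases "a < j")
        case True thus ?thesis using b(2)[OF True] by simp
      next
        case False thus ?thesis using permutes_not_in[OF Ip(3), of a] by simp
      qed
    qed
    show "(\<lambda>g. (g ` {..<j}, \<lambda>a. if a < j then pos (ls (g ` {..<j})) (g a) else a))
        ((\<lambda>(I,p). restrict (\<lambda>a. ls I ! p a) {..<j}) Ip) = Ip"
      unfolding Ip(1) prod.case im pe ..
    have "restrict (\<lambda>a. ls I ! p a) {..<j} \<in> Gi"
      unfolding Gi_def G_def using b(3) by (simp only: inj_on_restrict_eq mem_Collect_eq restrict_PiE) auto
    thus "(\<lambda>(I,p). restrict (\<lambda>a. ls I ! p a) {..<j}) Ip \<in> Gi"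
      unfolding Ip(1) prod.case .
    show "H ((\<lambda>(I,p). restrict (\<lambda>a. ls I ! p a) {..<j}) Ip) = (case Ip of (I,p) \<Rightarrow> H (restrict (\<lambda>a. ls I ! p a) {..<j}))"
      unfolding Ip(1) prod.case ..
  next
    fix g assume g: "g \<in> Gi"
    hence gi: "inj_on g {..<j}" and gG: "g \<in> G" unfolding Gi_def by auto
    note c = cb_inv[OF gi]
    show "(\<lambda>(I,p). restrict (\<lambda>a. ls I ! p a) {..<j})
        ((\<lambda>g. (g ` {..<j}, \<lambda>a. if a < j then pos (ls (g ` {..<j})) (g a) else a)) g) = g"
      unfolding prod.case
    proof
      fix a show "restrict (\<lambda>a. ls (g ` {..<j}) ! (if a < j then pos (ls (g ` {..<j})) (g a) else a)) {..<j} a = g a"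
      proof (cases "a < j")
        case True thus ?thesis using c(3)[OF True] by simp
      next
        case False thus ?thesis using PiE_arb[OF gG[unfolded G_def], of a] by simp
      qed
    qed
    show "(\<lambda>g. (g ` {..<j}, \<lambda>a. if a < j then pos (ls (g ` {..<j})) (g a) else a)) g \<in> Sigma J (\<lambda>_. P)"
      unfolding mem_Sigma_iff J_def P_def mem_Collect_eq using c(1,2) by (intro conjI)
  qed
  have step4: "(\<Sum>(I,p)\<in>Sigma J (\<lambda>_. P). H (restrict (\<lambda>a. ls I ! p a) {..<j}))
      = (\<Sum>I\<in>J. \<Sum>p\<in>P. (\<Prod>a<j. X a (ls I ! p a)) * (of_int (sign p) * det_nat j (\<lambda>a b. Y (ls I ! a) b)))"
  proof -
    have "(\<Sum>(I,p)\<in>Sigma J (\<lambda>_. P). H (restrict (\<lambda>a. ls I ! p a) {..<j}))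
       = (\<Sum>I\<in>J. \<Sum>p\<in>P. H (restrict (\<lambda>a. ls I ! p a) {..<j}))"
      by (rule sum.Sigma[symmetric]) (auto simp: J_def P_def finite_permutations)
    also have "\<dots> = (\<Sum>I\<in>J. \<Sum>p\<in>P. (\<Prod>a<j. X a (ls I ! p a)) * (of_int (sign p) * det_nat j (\<lambda>a b. Y (ls I ! a) b)))"
    proof (intro sum.cong refl)
      fix I p assume "I \<in> J" "p \<in> P"
      hence p: "p permutes {..<j}" unfolding P_def by auto
      have "det_nat j (\<lambda>a b. Y (restrict (\<lambda>a. ls I ! p a) {..<j} a) b) = det_nat j (\<lambda>a b. Y (ls I ! p a) b)"
        by (rule det_nat_cong) simp
      also have "\<dots> = of_int (sign p) * det_nat j (\<lambda>a b. Y (ls I ! a) b)"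
        by (rule det_nat_permute_rows[OF p, of "\<lambda>a b. Y (ls I ! a) b"])
      finally show "H (restrict (\<lambda>a. ls I ! p a) {..<j}) = (\<Prod>a<j. X a (ls I ! p a)) * (of_int (sign p) * det_nat j (\<lambda>a b. Y (ls I ! a) b))"
        unfolding H_def by simp
    qed
    finally show ?thesis .
  qed
  have step5: "(\<Sum>I\<in>J. \<Sum>p\<in>P. (\<Prod>a<j. X a (ls I ! p a)) * (of_int (sign p) * det_nat j (\<lambda>a b. Y (ls I ! a) b)))
     = (\<Sum>I\<in>J. det_nat j (\<lambda>a b. X a (ls I ! b)) * det_nat j (\<lambda>a b. Y (ls I ! a) b))"
    unfolding det_nat_def P_def by (simp add: sum_distrib_right mult_ac)
  show ?thesis using step1 step2 step3 step4 step5 unfolding J_def by simp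
qed




lemma wedge_nth: "wedge j x $ I = (if card I = j then det_nat j (\<lambda>a b. x a $ (ls I ! b)) else 0)"
  unfolding wedge_def by simp

lemma wedge_row_comb: assumes "k < j"
  shows "wedge j (x(k := (\<Sum>i<j. c i *\<^sub>R x i))) = c k *\<^sub>R wedge j x"
proof (rule iffD2[OF Finite_Cartesian_Product.vec_eq_iff], intro allI)
  fix I :: "'a set"
  show "wedge j (x(k := (\<Sum>i<j. c i *\<^sub>R x i))) $ I = (c k *\<^sub>R wedge j x) $ I"
  proof (cases "card I = j")
    case False thus ?thesis by (simp add: wedge_nth)
  next
    case True
    define D where "D = (\<lambda>i. det_nat j (\<lambda>a b. if a = k then x i $ (ls I ! b) else x a $ (ls I ! b)))"
    have "det_nat j (\<lambda>a b. (x(k := (\<Sum>i<j. c i *\<^sub>R x i))) a $ (ls I ! b))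
       = det_nat j (\<lambda>a b. if a = k then (\<Sum>i\<in>{..<j}. c i * (x i $ (ls I ! b))) else x a $ (ls I ! b))"
      by (rule det_nat_cong) (simp add: sum_component)
    also have "\<dots> = (\<Sum>i\<in>{..<j}. c i * D i)"
      unfolding D_def by (rule det_nat_row_sum[OF assms]) simp
    also have "\<dots> = c k * D k + (\<Sum>i\<in>{..<j}-{k}. c i * D i)"
      using assms by (simp add: sum.remove)
    also have "(\<Sum>i\<in>{..<j}-{k}. c i * D i) = 0"
    proof (rule sum.neutral, intro ballI)
      fix i assume i: "i \<in> {..<j}-{k}"
      have "D i = 0" unfolding D_def
        by (rule det_nat_identical_rows[of k i]) (use i assms in auto)
      thus "c i * D i = 0" by simp
    qed
    also have "D k = det_nat j (\<lambda>a b. x a $ (ls I ! b))"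
      unfolding D_def by (rule det_nat_cong) auto
    finally show ?thesis using True by (simp add: wedge_nth)
  qed
qed

lemma wedge_zero_row: assumes "k < j" shows "wedge j (x(k := 0)) = 0"
  using wedge_row_comb[OF assms, of x "\<lambda>_. 0"] by simp

lemma sum_delta0: "(\<Sum>i<(j::nat). (if i = k then \<alpha> else 0) *\<^sub>R x i) = (if k < j then \<alpha> *\<^sub>R x k else (0::'a::real_vector))"
  by (induct j) (auto simp: less_Suc_eq)

lemma wedge_scale_row: assumes "k < j" shows "wedge j (x(k := \<alpha> *\<^sub>R x k)) = \<alpha> *\<^sub>R wedge j x"
  using wedge_row_comb[OF assms, of x "\<lambda>i. if i = k then \<alpha> else 0"] assms
  by (simp add: sum_delta0)

lemma wedge_nonzero_inj: assumes "wedge j x \<noteq> 0" shows "inj_on x {..<j}"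
proof (rule ccontr)
  assume "\<not> inj_on x {..<j}"
  then obtain a b where ab: "a < j" "b < j" "a \<noteq> b" "x a = x b" unfolding inj_on_def by auto
  have "wedge j x = 0"
  proof (rule iffD2[OF Finite_Cartesian_Product.vec_eq_iff], intro allI)
    fix I :: "'a set"
    show "wedge j x $ I = 0 $ I"
      by (simp add: wedge_nth det_nat_identical_rows[OF ab(3) ab(1) ab(2)] ab(4))
  qed
  thus False using assms by simp
qed

lemma wedge_nonzero_indep: assumes "wedge j x \<noteq> 0" shows "independent (x ` {..<j})"
proof (rule ccontr)
  assume "\<not> independent (x ` {..<j})"
  then obtain u where u: "\<exists>v\<in>x ` {..<j}. u v \<noteq> 0" "(\<Sum>v\<in>x ` {..<j}. u v *\<^sub>R v) = 0"
    using dependent_finite[of "x ` {..<j}"] by auto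
  have inj: "inj_on x {..<j}" using wedge_nonzero_inj[OF assms] .
  have s0: "(\<Sum>i<j. u (x i) *\<^sub>R x i) = 0"
    using u(2) sum.reindex[OF inj, of "\<lambda>v. u v *\<^sub>R v"] by simp
  obtain k where k: "k < j" "u (x k) \<noteq> 0" using u(1) by auto
  have "u (x k) *\<^sub>R wedge j x = wedge j (x(k := 0))"
    using wedge_row_comb[OF k(1), of x "\<lambda>i. u (x i)"] s0 by simp
  also have "\<dots> = 0" by (rule wedge_zero_row[OF k(1)])
  finally show False using k(2) assms by simp
qed

lemma wedge_in_ext: "wedge j x \<in> ext_power j"
  unfolding ext_power_def by (rule span_base) simp

lemma subspace_ext: "subspace (ext_power j)"
  unfolding ext_power_def by (rule subspace_span)

lemma wedge_exists_nonzero: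
  assumes "j \<le> CARD('n::{finite,linorder})"
  shows "\<exists>x::nat \<Rightarrow> real^('n::{finite,linorder}). wedge j x \<noteq> 0"
proof -
  obtain I :: "'n set" where I: "card I = j"
    using obtain_subset_with_card_n[of j "UNIV::'n set"] assms by auto
  define x where "x = (\<lambda>a. axis (ls I ! a) (1::real) :: (real,'n) Finite_Cartesian_Product.vec)"
  have len: "length (ls I) = j" using I by simp
  have "wedge j x $ I = det_nat j (\<lambda>a b. if a = b then 1 else 0)"
    unfolding wedge_nth using I
    by (simp, intro det_nat_cong) (auto simp: x_def axis_def nth_eq_iff_index_eq len)
  also have "\<dots> = 1" by (rule det_nat_id)
  finally have "wedge j x \<noteq> 0" by auto
  thus ?thesis by blast
qed




lemma int_in_subset: "int_in W K \<subseteq> K" unfolding int_in_def by auto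

lemma int_in_scale:
  fixes K W :: "'a::real_normed_vector set"
  assumes "cone K" "subspace W" "0 < c" "v \<in> int_in W K"
  shows "c *\<^sub>R v \<in> int_in W K"
proof -
  from assms(4) obtain e where vK: "v \<in> K" and e: "e > 0" and ball: "\<forall>y\<in>W. dist y v < e \<longrightarrow> y \<in> K"
    unfolding int_in_def by auto
  have "c *\<^sub>R v \<in> K" using assms(1) vK assms(3) unfolding cone_def by auto
  moreover have "\<forall>y\<in>W. dist y (c *\<^sub>R v) < c * e \<longrightarrow> y \<in> K"
  proof (intro ballI impI)
    fix y assume y: "y \<in> W" "dist y (c *\<^sub>R v) < c * e"
    have yW: "inverse c *\<^sub>R y \<in> W" using assms(2) y(1) by (rule subspace_scale)
    have "inverse c *\<^sub>R y - v = inverse c *\<^sub>R (y - c *\<^sub>R v)" using assms(3) by (simp add: algebra_simps)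
    hence "dist (inverse c *\<^sub>R y) v = inverse c * dist y (c *\<^sub>R v)"
      using assms(3) by (simp add: dist_norm)
    also have "\<dots> < inverse c * (c * e)" using y(2) assms(3) by simp
    also have "\<dots> = e" using assms(3) by simp
    finally have "inverse c *\<^sub>R y \<in> K" using ball yW by auto
    hence "c *\<^sub>R (inverse c *\<^sub>R y) \<in> K"
      using assms(1)[unfolded cone_def, rule_format, of "inverse c *\<^sub>R y" c] assms(3) by simp
    thus "y \<in> K" using assms(3) by simp
  qed
  moreover have "c * e > 0" using assms(3) e by simp
  ultimately show ?thesis unfolding int_in_def by blast
qed

lemma neg_image_iff: "(v::'a::ab_group_add) \<in> uminus ` K \<longleftrightarrow> - v \<in> K"
  by (metis image_iff minus_minus)

lemma int_in_neg:
  fixes K W :: "'a::real_normed_vector set"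
  assumes "subspace W"
  shows "v \<in> int_in W (uminus ` K) \<longleftrightarrow> - v \<in> int_in W K"
proof
  assume "v \<in> int_in W (uminus ` K)"
  then obtain e where e: "v \<in> uminus ` K" "e > 0" "\<forall>y\<in>W. dist y v < e \<longrightarrow> y \<in> uminus ` K"
    unfolding int_in_def by auto
  have "\<forall>y\<in>W. dist y (-v) < e \<longrightarrow> y \<in> K"
  proof (intro ballI impI)
    fix y assume y: "y \<in> W" "dist y (-v) < e"
    have d: "dist (-y) v = dist y (-v)" by (metis dist_minus minus_minus)
    have "-y \<in> W" using subspace_neg[OF assms y(1)] .
    hence "-y \<in> uminus ` K" using e(3) d y(2) by simp
    thus "y \<in> K" unfolding neg_image_iff by simp
  qed
  moreover have "-v \<in> K" using e(1) unfolding neg_image_iff .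
  ultimately show "- v \<in> int_in W K" unfolding int_in_def using e(2) by blast
next
  assume "- v \<in> int_in W K"
  then obtain e where e: "-v \<in> K" "e > 0" "\<forall>y\<in>W. dist y (-v) < e \<longrightarrow> y \<in> K"
    unfolding int_in_def by auto
  have "\<forall>y\<in>W. dist y v < e \<longrightarrow> y \<in> uminus ` K"
  proof (intro ballI impI)
    fix y assume y: "y \<in> W" "dist y v < e"
    have d: "dist (-y) (-v) = dist y v" by (rule dist_minus)
    have "-y \<in> W" using subspace_neg[OF assms y(1)] .
    hence "-y \<in> K" using e(3) d y(2) by simp
    thus "y \<in> uminus ` K" unfolding neg_image_iff .
  qed
  moreover have "v \<in> uminus ` K" using e(1) unfolding neg_image_iff .
  ultimately show "v \<in> int_in W (uminus ` K)" unfolding int_in_def using e(2) by blast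
qed

lemma cone_neg: "cone K \<Longrightarrow> cone (uminus ` K)"
  unfolding cone_def by (auto simp: neg_image_iff)

lemma zero_not_int:
  fixes K W :: "'a::real_normed_vector set"
  assumes "K \<inter> uminus ` K \<subseteq> {0}" "subspace W" "u \<in> W" "u \<noteq> 0"
  shows "0 \<notin> int_in W K"
proof
  assume "0 \<in> int_in W K"
  then obtain e where e: "e > 0" "\<forall>y\<in>W. dist y 0 < e \<longrightarrow> y \<in> K" unfolding int_in_def by auto
  define y where "y = (e / (2 * norm u)) *\<^sub>R u"
  have nu: "norm u > 0" using assms(4) by simp
  have yW: "y \<in> W" "-y \<in> W" unfolding y_def using assms(2,3) by (auto intro: subspace_scale subspace_neg)
  have ny: "norm y = e / 2" unfolding y_def using nu e(1) by simp
  have "dist y 0 < e" "dist (-y) 0 < e" using ny e(1) by auto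
  hence "y \<in> K" "-y \<in> K" using e(2) yW by auto
  hence "y \<in> K \<inter> uminus ` K" by (auto simp: neg_image_iff)
  hence "y = 0" using assms(1) by auto
  thus False using ny e(1) by simp
qed

definition Sset :: "nat \<Rightarrow> (real^('n::{finite,linorder} set)) set \<Rightarrow> (real^('n::{finite,linorder})) set" where
  "Sset j K = {x1. \<exists>x. x 0 = x1 \<and>
      wedge j x \<in> int_in (ext_power j) K \<union> int_in (ext_power j) (uminus ` K)}"

lemma T_eq: "T_set j K = closure (Sset j K)"
  unfolding T_set_def Sset_def ..

lemma U_scale:
  fixes K W :: "'a::real_normed_vector set"
  assumes "cone K" "subspace W" "\<beta> \<noteq> 0" "w \<in> int_in W K \<union> int_in W (uminus ` K)"
  shows "\<beta> *\<^sub>R w \<in> int_in W K \<union> int_in W (uminus ` K)"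
proof (cases "\<beta> > 0")
  case True
  show ?thesis
  proof (cases "w \<in> int_in W K")
    case w: True
    show ?thesis using int_in_scale[OF assms(1,2) True w] by (rule UnI1)
  next
    case False
    hence w: "w \<in> int_in W (uminus ` K)" using assms(4) by simp
    show ?thesis using int_in_scale[OF cone_neg[OF assms(1)] assms(2) True w] by (rule UnI2)
  qed
next
  case False
  hence b: "- \<beta> > 0" using assms(3) by simp
  have eq: "\<beta> *\<^sub>R w = (- \<beta>) *\<^sub>R (- w)" by simp
  show ?thesis
  proof (cases "w \<in> int_in W K")
    case True
    hence "- w \<in> int_in W (uminus ` K)" using int_in_neg[OF assms(2), of "-w" K] by simp
    hence "(- \<beta>) *\<^sub>R (- w) \<in> int_in W (uminus ` K)"
      using int_in_scale[OF cone_neg[OF assms(1)] assms(2) b] by blast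
    thus ?thesis unfolding eq by (rule UnI2)
  next
    case False
    hence "w \<in> int_in W (uminus ` K)" using assms(4) by simp
    hence "- w \<in> int_in W K" using int_in_neg[OF assms(2)] by simp
    hence "(- \<beta>) *\<^sub>R (- w) \<in> int_in W K" using int_in_scale[OF assms(1,2) b] by blast
    thus ?thesis unfolding eq by (rule UnI1)
  qed
qed

lemma S_scale:
  assumes "cone K" "0 < j" "x1 \<in> Sset j K" "\<alpha> \<noteq> 0"
  shows "\<alpha> *\<^sub>R x1 \<in> Sset j K"
proof -
  obtain x where x: "x 0 = x1" "wedge j x \<in> int_in (ext_power j) K \<union> int_in (ext_power j) (uminus ` K)"
    using assms(3) unfolding Sset_def by auto
  have "wedge j (x(0 := \<alpha> *\<^sub>R x 0)) = \<alpha> *\<^sub>R wedge j x" by (rule wedge_scale_row[OF assms(2)])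
  hence "wedge j (x(0 := \<alpha> *\<^sub>R x 0)) \<in> int_in (ext_power j) K \<union> int_in (ext_power j) (uminus ` K)"
    using U_scale[OF assms(1) subspace_ext assms(4) x(2)] by simp
  moreover have "(x(0 := \<alpha> *\<^sub>R x 0)) 0 = \<alpha> *\<^sub>R x1" using x(1) by simp
  ultimately show ?thesis unfolding Sset_def by blast
qed

lemma closure_scale_closed:
  fixes S :: "'a::real_normed_vector set"
  assumes "\<And>y \<alpha>. y \<in> S \<Longrightarrow> \<alpha> \<noteq> 0 \<Longrightarrow> \<alpha> *\<^sub>R y \<in> S" "closure S \<noteq> {}" "v \<in> closure S"
  shows "\<alpha> *\<^sub>R v \<in> closure S"
proof (cases "\<alpha> = 0")
  case False
  show ?thesis unfolding closure_approachable
  proof (intro allI impI)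
    fix e :: real assume e: "e > 0"
    have "e / \<bar>\<alpha>\<bar> > 0" using e False by simp
    then obtain y where y: "y \<in> S" "dist y v < e / \<bar>\<alpha>\<bar>"
      using assms(3) unfolding closure_approachable by blast
    have "dist (\<alpha> *\<^sub>R y) (\<alpha> *\<^sub>R v) = \<bar>\<alpha>\<bar> * dist y v"
      by (simp add: dist_norm flip: scaleR_diff_right)
    also have "\<dots> < e" using y(2) False by (simp add: field_simps)
    finally show "\<exists>y\<in>S. dist y (\<alpha> *\<^sub>R v) < e" using assms(1)[OF y(1) False] by blast
  qed
next
  case True
  obtain y where y: "y \<in> S" using assms(2) closure_empty by auto
  show ?thesis unfolding closure_approachable True
  proof (intro allI impI)
    fix e :: real assume e: "e > 0"
    define t where "t = e / (2 * (norm y + 1))"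
    have "2 * (norm y + 1) > 0" by (smt (verit) norm_ge_zero)
    hence t: "t > 0" unfolding t_def using e by (simp add: divide_pos_pos)
    have "norm (t *\<^sub>R y) = t * norm y" using t by simp
    also have "\<dots> < e"
    proof -
      have "t * norm y \<le> t * (norm y + 1)" using t by simp
      also have "\<dots> = e / 2" using \<open>2 * (norm y + 1) > 0\<close> unfolding t_def by (simp add: field_simps)
      finally show ?thesis using e by simp
    qed
    finally show "\<exists>z\<in>S. dist z (0 *\<^sub>R v) < e" using assms(1)[OF y] t by (intro bexI[of _ "t *\<^sub>R y"]) auto
  qed
qed




lemma span_image_sum:
  fixes x :: "nat \<Rightarrow> 'a::real_vector"
  assumes "inj_on x {..<j}" "v \<in> span (x ` {..<j})"
  shows "\<exists>d. v = (\<Sum>i<j. d i *\<^sub>R x i)"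
proof -
  have "v \<in> range (\<lambda>u. \<Sum>y\<in>x ` {..<j}. u y *\<^sub>R y)"
  proof -
    have fin: "finite (x ` {..<j})" by simp
    show ?thesis using assms(2) span_finite[OF fin] by simp
  qed
  then obtain u where "v = (\<Sum>y\<in>x ` {..<j}. u y *\<^sub>R y)" by auto
  also have "\<dots> = (\<Sum>i<j. u (x i) *\<^sub>R x i)"
    using sum.reindex[OF assms(1), of "\<lambda>y. u y *\<^sub>R y"] by simp
  finally show ?thesis by (intro exI[of _ "\<lambda>i. u (x i)"])
qed

lemma T_lower:
  fixes K :: "(real^('n::{finite,linorder} set)) set" and x :: "nat \<Rightarrow> real^('n::{finite,linorder})"
  assumes cone: "cone K" and pt: "K \<inter> uminus ` K \<subseteq> {0}" and j: "0 < j" "j \<le> CARD('n)"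
    and x: "wedge j x \<in> int_in (ext_power j) K \<union> int_in (ext_power j) (uminus ` K)"
  shows "dim (span (x ` {..<j})) = j" "span (x ` {..<j}) \<subseteq> T_set j K"
proof -
  obtain y :: "nat \<Rightarrow> (real,'n) Finite_Cartesian_Product.vec" where y: "wedge j y \<noteq> 0" using wedge_exists_nonzero[OF j(2)] by auto
  have u: "wedge j y \<in> ext_power j" by (rule wedge_in_ext)
  have z0: "0 \<notin> int_in (ext_power j) K" by (rule zero_not_int[OF pt subspace_ext u y])
  have wnz: "wedge j x \<noteq> 0"
  proof
    assume w0: "wedge j x = 0"
    show False
    proof (cases "wedge j x \<in> int_in (ext_power j) K")
      case True thus False using z0 w0 by simp
    next
      case False
      hence "wedge j x \<in> int_in (ext_power j) (uminus ` K)" using x by simp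
      hence "- wedge j x \<in> int_in (ext_power j) K" using iffD1[OF int_in_neg[OF subspace_ext[of j]]] by blast
      thus False using z0 w0 by simp
    qed
  qed
  have inj: "inj_on x {..<j}" by (rule wedge_nonzero_inj[OF wnz])
  have ind: "independent (x ` {..<j})" by (rule wedge_nonzero_indep[OF wnz])
  show "dim (span (x ` {..<j})) = j"
    using dim_span_eq_card_independent[OF ind] card_image[OF inj] by simp
  have claim: "(\<Sum>i<j. d i *\<^sub>R x i) \<in> Sset j K" if d0: "d 0 \<noteq> 0" for d
  proof -
    have "wedge j (x(0 := (\<Sum>i<j. d i *\<^sub>R x i))) = d 0 *\<^sub>R wedge j x" by (rule wedge_row_comb[OF j(1)])
    hence "wedge j (x(0 := (\<Sum>i<j. d i *\<^sub>R x i))) \<in> int_in (ext_power j) K \<union> int_in (ext_power j) (uminus ` K)"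
      using U_scale[OF cone subspace_ext d0 x] by simp
    moreover have "(x(0 := (\<Sum>i<j. d i *\<^sub>R x i))) 0 = (\<Sum>i<j. d i *\<^sub>R x i)" by simp
    ultimately show ?thesis unfolding Sset_def by blast
  qed
  show "span (x ` {..<j}) \<subseteq> T_set j K"
  proof
    fix v assume "v \<in> span (x ` {..<j})"
    then obtain d where v: "v = (\<Sum>i<j. d i *\<^sub>R x i)" using span_image_sum[OF inj] by blast
    show "v \<in> T_set j K" unfolding T_eq
    proof (cases "d 0 = 0")
      case False thus "v \<in> closure (Sset j K)" using claim[of d, OF False] v closure_subset by blast
    next
      case True
      show "v \<in> closure (Sset j K)" unfolding closure_approachable
      proof (intro allI impI)
        fix e :: real assume e: "e > 0"
        define t where "t = e / (2 * (norm (x 0) + 1))"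
        have pos: "2 * (norm (x 0) + 1) > 0" by (smt (verit) norm_ge_zero)
        hence t: "t > 0" unfolding t_def using e by (simp add: divide_pos_pos)
        define d' where "d' = (\<lambda>i. d i + (if i = 0 then t else 0))"
        have d'0: "d' 0 \<noteq> 0" unfolding d'_def using True t by simp
        have "(\<Sum>i<j. d' i *\<^sub>R x i) = (\<Sum>i<j. d i *\<^sub>R x i) + (\<Sum>i<j. (if i = 0 then t else 0) *\<^sub>R x i)"
          unfolding d'_def by (simp add: scaleR_add_left sum.distrib)
        also have "\<dots> = v + t *\<^sub>R x 0" using j(1) v by (simp add: sum_delta0)
        finally have eq: "(\<Sum>i<j. d' i *\<^sub>R x i) = v + t *\<^sub>R x 0" .
        have "dist (v + t *\<^sub>R x 0) v = t * norm (x 0)" using t by (simp add: dist_norm)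
        also have "\<dots> \<le> t * (norm (x 0) + 1)" using t by simp
        also have "\<dots> = e / 2" using pos unfolding t_def by (simp add: field_simps)
        also have "\<dots> < e" using e by simp
        finally show "\<exists>y\<in>Sset j K. dist y v < e" using claim[of d', OF d'0] eq by metis
      qed
    qed
  qed
qed




definition fco :: "('n::{finite,linorder} \<Rightarrow> real^('n::{finite,linorder})) \<Rightarrow> 'n \<Rightarrow> real^('n::{finite,linorder}) \<Rightarrow> real" where
  "fco e k v = representation (range e) v (e k)"

lemma basis_span: fixes e :: "'n::finite \<Rightarrow> real^'n" assumes "is_basis e" shows "span (range e) = UNIV"
proof -
  have ind: "independent (range e)" and inj: "inj e" using assms unfolding is_basis_def by auto
  have "card (range e) = CARD('n)" using card_image[OF inj] by simp
  hence "dim (UNIV :: (real^'n) set) \<le> card (range e)" using dim_subset_UNIV_cart by metis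
  hence "UNIV \<subseteq> span (range e)" using card_ge_dim_independent[OF _ ind] by blast
  thus ?thesis by auto
qed

lemma fco_bl: assumes "is_basis e" shows "bounded_linear (fco e k)"
  unfolding fco_def[abs_def]
  using bounded_linear_representation[of "range e" "e k"] assms basis_span[OF assms]
  unfolding is_basis_def by simp

lemma fco_linear: assumes "is_basis e" shows "linear (fco e k)"
  using fco_bl[OF assms] bounded_linear.linear by blast

lemma fco_basis: assumes "is_basis e" shows "fco e k (e l) = (if k = l then 1 else 0)"
proof -
  have ind: "independent (range e)" and inj: "inj e" using assms unfolding is_basis_def by auto
  have "representation (range e) (e l) = (\<lambda>v. if v = e l then 1 else 0)"
    by (rule representation_basis[OF ind]) simp
  thus ?thesis unfolding fco_def using inj by (auto dest: injD)
qed

lemma fco_expand: assumes "is_basis e"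
  shows "fco e k v = (\<Sum>m\<in>UNIV. v $ m * fco e k (axis m 1))"
proof -
  have lin: "linear (fco e k)" by (rule fco_linear[OF assms])
  have "v = (\<Sum>m\<in>UNIV. v $ m *\<^sub>R axis m 1)" using basis_expansion[of v] unfolding scalar_mult_eq_scaleR by simp
  hence "fco e k v = fco e k (\<Sum>m\<in>UNIV. v $ m *\<^sub>R axis m 1)" by simp
  also have "\<dots> = (\<Sum>m\<in>UNIV. v $ m * fco e k (axis m 1))"
    by (simp add: linear_sum[OF lin] linear_scale[OF lin])
  finally show ?thesis .
qed

definition Lam :: "('n::{finite,linorder} \<Rightarrow> real^('n::{finite,linorder})) \<Rightarrow> nat \<Rightarrow> 'n set \<Rightarrow> real^('n set) \<Rightarrow> real" where
  "Lam e j I v = (\<Sum>I'\<in>{I'. card I' = j}. v $ I' * det_nat j (\<lambda>a' b'. fco e (ls I ! b') (axis (ls I' ! a') 1)))"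

lemma Lam_wedge: assumes "is_basis e"
  shows "Lam e j I (wedge j u) = det_nat j (\<lambda>b a. fco e (ls I ! a) (u b))"
proof -
  have "det_nat j (\<lambda>b a. fco e (ls I ! a) (u b))
      = det_nat j (\<lambda>b a. \<Sum>m\<in>UNIV. u b $ m * fco e (ls I ! a) (axis m 1))"
    by (rule det_nat_cong) (rule fco_expand[OF assms])
  also have "\<dots> = (\<Sum>I'\<in>{I'. card I' = j}. det_nat j (\<lambda>b a'. u b $ (ls I' ! a'))
        * det_nat j (\<lambda>a' a. fco e (ls I ! a) (axis (ls I' ! a') 1)))"
    by (rule cauchy_binet)
  also have "\<dots> = Lam e j I (wedge j u)"
    unfolding Lam_def by (rule sum.cong) (auto simp: wedge_nth)
  finally show ?thesis by simp
qed

lemma Lam_lin: assumes "finite A"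
  shows "Lam e j I (\<Sum>i\<in>A. c i *\<^sub>R V i) = (\<Sum>i\<in>A. c i * Lam e j I (V i))"
  unfolding Lam_def
  by (simp add: sum_component sum_distrib_right sum_distrib_left mult.assoc sum.swap[of _ A])

lemma delta_det: fixes I I'' :: "'n::{finite,linorder} set" assumes "card I = j" "card I'' = j"
  shows "det_nat j (\<lambda>b a. if ls I ! a = ls I'' ! b then 1 else 0) = (if I = I'' then 1 else 0)"
proof (cases "I = I''")
  case True
  have len: "length (ls I'') = j" using assms by simp
  have "det_nat j (\<lambda>b a. if ls I ! a = ls I'' ! b then 1 else 0) = det_nat j (\<lambda>a b. if a = b then 1 else 0)"
  proof (rule det_nat_cong)
    fix a b assume ab: "a < j" "b < j"
    have "ls I'' ! a = ls I'' ! b \<longleftrightarrow> a = b" using len ab by (simp add: nth_eq_iff_index_eq)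
    thus "(if ls I ! b = ls I'' ! a then 1 else 0) = (if a = b then 1 else (0::real))" using True by auto
  qed
  thus ?thesis using True det_nat_id by simp
next
  case False
  have fin: "finite I" "finite I''" by auto
  have "\<not> I'' \<subseteq> I"
  proof
    assume "I'' \<subseteq> I"
    hence "I'' = I" using card_subset_eq[OF fin(1)] assms by simp
    thus False using False by simp
  qed
  then obtain y where y: "y \<in> I''" "y \<notin> I" by auto
  then obtain b where b: "b < j" "ls I'' ! b = y"
    using assms(2) by (metis in_set_conv_nth set_sorted_list_of_set fin(2) length_sorted_list_of_set)
  have "det_nat j (\<lambda>b a. if ls I ! a = ls I'' ! b then 1 else 0) = 0"
  proof (rule det_nat_zero_row[OF b(1)])
    fix a assume "a < j"
    hence "ls I ! a \<in> I" using assms(1) by (metis nth_mem set_sorted_list_of_set fin(1) length_sorted_list_of_set)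
    thus "(if ls I ! a = ls I'' ! b then 1 else 0) = (0::real)" using b y by auto
  qed
  thus ?thesis using False by simp
qed

lemma Lam_E: assumes "is_basis e" "card I = j" "card I'' = j"
  shows "Lam e j I (wedge j (\<lambda>a. e (ls I'' ! a))) = (if I = I'' then 1 else 0)"
proof -
  have "Lam e j I (wedge j (\<lambda>a. e (ls I'' ! a))) = det_nat j (\<lambda>b a. fco e (ls I ! a) (e (ls I'' ! b)))"
    by (rule Lam_wedge[OF assms(1)])
  also have "\<dots> = det_nat j (\<lambda>b a. if ls I ! a = ls I'' ! b then 1 else 0)"
    by (rule det_nat_cong) (simp add: fco_basis[OF assms(1)])
  also have "\<dots> = (if I = I'' then 1 else 0)" by (rule delta_det[OF assms(2,3)])
  finally show ?thesis .
qed

lemma Lam_coeff: assumes "is_basis e" "card I = j"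
  shows "Lam e j I (\<Sum>I''\<in>{I''. card I'' = j}. a I'' *\<^sub>R wedge j (\<lambda>b. e (ls I'' ! b))) = a I"
proof -
  have "Lam e j I (\<Sum>I''\<in>{I''. card I'' = j}. a I'' *\<^sub>R wedge j (\<lambda>b. e (ls I'' ! b)))
     = (\<Sum>I''\<in>{I''. card I'' = j}. a I'' * (if I = I'' then 1 else 0))"
    by (simp add: Lam_lin Lam_E[OF assms(1,2)])
  also have "\<dots> = (\<Sum>I''\<in>{I''. card I'' = j}. if I = I'' then a I'' else 0)"
    by (rule sum.cong) auto
  also have "\<dots> = a I" using assms(2) by (subst sum.delta') auto
  finally show ?thesis .
qed

lemma remove_nth: assumes "distinct l" "a < length l" "a' < length l - 1"
  shows "remove1 (l ! a) l ! a' = l ! (if a' < a then a' else Suc a')"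
proof -
  have l: "l = take a l @ l ! a # drop (Suc a) l" using id_take_nth_drop[OF assms(2)] .
  have notin: "l ! a \<notin> set (take a l)"
  proof
    assume "l ! a \<in> set (take a l)"
    then obtain i where i: "i < length (take a l)" "take a l ! i = l ! a" by (auto simp: in_set_conv_nth)
    hence "i < a" "l ! i = l ! a" by auto
    thus False using assms(1,2) nth_eq_iff_index_eq by fastforce
  qed
  have "remove1 (l ! a) l = take a l @ drop (Suc a) l"
    by (subst l, simp only: remove1_append notin if_False) simp
  thus ?thesis using assms(2,3) by (auto simp: nth_append min_def)
qed

lemma laplace_identity:
  fixes x :: "nat \<Rightarrow> real^('n::{finite,linorder})"
  assumes e: "is_basis e" and j: "1 \<le> j" and J: "card J = Suc j"
    and w: "wedge j x = (\<Sum>I\<in>{I. card I = j}. a I *\<^sub>R wedge j (\<lambda>b. e (ls I ! b)))"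
  shows "(\<Sum>i<Suc j. (-1)^i * fco e (ls J ! i) (x 0) * a (J - {ls J ! i})) = 0"
proof -
  define l where "l = ls J"
  have len: "length l = Suc j" "distinct l" using J unfolding l_def by auto
  define u where "u = (\<lambda>b::nat. if b = 0 then x 0 else x (b - 1))"
  have "det_nat (Suc j) (\<lambda>b i. fco e (l ! i) (u b)) = 0"
    by (rule det_nat_identical_rows[of 0 1]) (use j in \<open>auto simp: u_def\<close>)
  moreover have "det_nat (Suc j) (\<lambda>b i. fco e (l ! i) (u b))
      = (\<Sum>i<Suc j. (-1)^i * fco e (l ! i) (x 0) * a (J - {l ! i}))"
    unfolding det_nat_laplace
  proof (rule sum.cong[OF refl])
    fix i assume i: "i \<in> {..<Suc j}"
    have cJ: "card (J - {l ! i}) = j"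
      using J i len by (metis card_Diff_singleton diff_Suc_1 lessThan_iff nth_mem l_def
          set_sorted_list_of_set card.infinite nat.distinct(1) finite_subset subset_UNIV finite)
    have "det_nat j (\<lambda>b' a'. fco e (l ! (if a' < i then a' else Suc a')) (u (Suc b')))
        = det_nat j (\<lambda>b' a'. fco e (ls (J - {l ! i}) ! a') (x b'))"
    proof (rule det_nat_cong)
      fix b' a' assume "b' < j" "a' < j"
      have "ls (J - {l ! i}) ! a' = remove1 (l ! i) l ! a'"
        unfolding l_def by (simp add: sorted_list_of_set_remove)
      also have "\<dots> = l ! (if a' < i then a' else Suc a')"
        by (rule remove_nth) (use len i \<open>a' < j\<close> in auto)
      finally show "fco e (l ! (if a' < i then a' else Suc a')) (u (Suc b')) = fco e (ls (J - {l ! i}) ! a') (x b')"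
        by (simp add: u_def)
    qed
    also have "\<dots> = Lam e j (J - {l ! i}) (wedge j x)" by (rule Lam_wedge[OF e, symmetric])
    also have "\<dots> = a (J - {l ! i})" unfolding w by (rule Lam_coeff[OF e cJ])
    finally show "(-1)^i * fco e (l ! i) (u 0) * det_nat j (\<lambda>b' a'. fco e (l ! (if a' < i then a' else Suc a')) (u (Suc b')))
        = (-1)^i * fco e (l ! i) (x 0) * a (J - {l ! i})" by (simp add: u_def)
  qed
  ultimately show ?thesis unfolding l_def by simp
qed




lemma pos_repr:
  fixes K :: "(real^('n::{finite,linorder} set)) set"
  assumes KK: "K \<subseteq> ext_basic_cone j e s" and KW: "K \<subseteq> ext_power j"
    and w: "w \<in> int_in (ext_power j) K" and ne: "{I::'n set. card I = j} \<noteq> {}"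
  shows "\<exists>c. (\<forall>I\<in>{I::'n set. card I = j}. c I > 0) \<and>
     w = (\<Sum>I\<in>{I. card I = j}. c I *\<^sub>R (s I *\<^sub>R wedge j (\<lambda>a. e (ls I ! a))))"
proof -
  define JJ where "JJ = {I::'n set. card I = j}"
  define v where "v = (\<lambda>I. s I *\<^sub>R wedge j (\<lambda>a. e (ls I ! a)))"
  have finJJ: "finite JJ" by simp
  obtain eps where wK: "w \<in> K" and eps: "eps > 0" and ball: "\<forall>y\<in>ext_power j. dist y w < eps \<longrightarrow> y \<in> K"
    using w unfolding int_in_def by auto
  have wW: "w \<in> ext_power j" using wK KW by auto
  define M where "M = 1 + (\<Sum>I\<in>JJ. norm (v I))"
  have M: "M > 0" unfolding M_def by (smt (verit) norm_ge_zero sum_nonneg)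
  have nv: "norm (v I0) < M" if "I0 \<in> JJ" for I0
  proof -
    have "norm (v I0) \<le> (\<Sum>I\<in>JJ. norm (v I))" by (rule member_le_sum[OF that]) (auto simp: finJJ)
    thus ?thesis unfolding M_def by simp
  qed
  define d where "d = eps / M"
  have d: "d > 0" unfolding d_def using eps M by simp
  have "\<forall>I0\<in>JJ. \<exists>c. (\<forall>I. 0 \<le> c I) \<and> w - d *\<^sub>R v I0 = (\<Sum>I\<in>JJ. c I *\<^sub>R v I)"
  proof
    fix I0 assume I0: "I0 \<in> JJ"
    have vW: "v I0 \<in> ext_power j" unfolding v_def by (intro subspace_scale[OF subspace_ext] wedge_in_ext)
    have yW: "w - d *\<^sub>R v I0 \<in> ext_power j"
      by (intro subspace_diff[OF subspace_ext] wW subspace_scale[OF subspace_ext] vW)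
    have "dist (w - d *\<^sub>R v I0) w = d * norm (v I0)" using d by (simp add: dist_norm)
    also have "\<dots> < d * M" using nv[OF I0] d by simp
    also have "\<dots> = eps" unfolding d_def using M by simp
    finally have "w - d *\<^sub>R v I0 \<in> K" using ball yW by auto
    hence "w - d *\<^sub>R v I0 \<in> ext_basic_cone j e s" using KK by auto
    thus "\<exists>c. (\<forall>I. 0 \<le> c I) \<and> w - d *\<^sub>R v I0 = (\<Sum>I\<in>JJ. c I *\<^sub>R v I)"
      unfolding ext_basic_cone_def JJ_def v_def by auto
  qed
  then obtain C where C: "\<And>I0. I0 \<in> JJ \<Longrightarrow> (\<forall>I. 0 \<le> C I0 I) \<and> w - d *\<^sub>R v I0 = (\<Sum>I\<in>JJ. C I0 I *\<^sub>R v I)"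
    by metis
  define a where "a = (\<lambda>I0 I. C I0 I + (if I = I0 then d else 0))"
  have weq: "w = (\<Sum>I\<in>JJ. a I0 I *\<^sub>R v I)" if I0: "I0 \<in> JJ" for I0
  proof -
    have "(\<Sum>I\<in>JJ. a I0 I *\<^sub>R v I) = (\<Sum>I\<in>JJ. C I0 I *\<^sub>R v I) + (\<Sum>I\<in>JJ. (if I = I0 then d else 0) *\<^sub>R v I)"
      unfolding a_def by (simp add: scaleR_add_left sum.distrib)
    also have "(\<Sum>I\<in>JJ. (if I = I0 then d else 0) *\<^sub>R v I) = (\<Sum>I\<in>JJ. if I = I0 then d *\<^sub>R v I0 else 0)"
      by (rule sum.cong) auto
    also have "\<dots> = d *\<^sub>R v I0" using I0 finJJ by (simp add: sum.delta)
    also have "(\<Sum>I\<in>JJ. C I0 I *\<^sub>R v I) = w - d *\<^sub>R v I0" using C[OF I0] by simp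
    finally show ?thesis by simp
  qed
  define N where "N = real (card JJ)"
  have N: "N > 0" unfolding N_def using ne finJJ by (simp add: JJ_def card_gt_0_iff)
  define c where "c = (\<lambda>I. (\<Sum>I0\<in>JJ. a I0 I) / N)"
  have cpos: "c I > 0" if I: "I \<in> JJ" for I
  proof -
    have "a I I \<le> (\<Sum>I0\<in>JJ. a I0 I)"
      by (rule member_le_sum[OF I]) (use C in \<open>auto simp: a_def finJJ\<close>)
    moreover have "a I I > 0" unfolding a_def using C[OF I] d by (smt (verit))
    ultimately show ?thesis unfolding c_def using N by simp
  qed
  have "(\<Sum>I\<in>JJ. c I *\<^sub>R v I) = (\<Sum>I\<in>JJ. inverse N *\<^sub>R (\<Sum>I0\<in>JJ. a I0 I *\<^sub>R v I))"
  proof (rule sum.cong[OF refl])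
    fix I
    show "c I *\<^sub>R v I = inverse N *\<^sub>R (\<Sum>I0\<in>JJ. a I0 I *\<^sub>R v I)"
      by (simp only: c_def scaleR_sum_left[symmetric] scaleR_scaleR divide_inverse_commute)
  qed
  also have "\<dots> = inverse N *\<^sub>R (\<Sum>I\<in>JJ. \<Sum>I0\<in>JJ. a I0 I *\<^sub>R v I)" by (simp add: scaleR_sum_right)
  also have "(\<Sum>I\<in>JJ. \<Sum>I0\<in>JJ. a I0 I *\<^sub>R v I) = (\<Sum>I0\<in>JJ. \<Sum>I\<in>JJ. a I0 I *\<^sub>R v I)" by (rule sum.swap)
  also have "\<dots> = (\<Sum>I0\<in>JJ. w)" by (rule sum.cong) (auto simp: weq)
  also have "(\<Sum>I0\<in>JJ. w) = N *\<^sub>R w" unfolding N_def by (rule sum_constant_scaleR)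
  also have "inverse N *\<^sub>R (N *\<^sub>R w) = w" using N by simp
  finally show ?thesis using cpos unfolding JJ_def v_def by blast
qed


lemma exists_card_subset: assumes "j \<le> CARD('n::finite)" shows "{I::'n set. card I = j} \<noteq> {}"
  using obtain_subset_with_card_n[of j "UNIV::'n set"] assms by auto

lemma S_subset_C:
  fixes K :: "(real^('n::{finite,linorder} set)) set"
  assumes e: "is_basis e" and KK: "K \<subseteq> ext_basic_cone j e s" and KW: "K \<subseteq> ext_power j"
    and j: "1 \<le> j" "j \<le> CARD('n)" and J: "card (J::'n set) = Suc j"
  shows "Sset j K \<subseteq> {v. \<not>(\<forall>i<Suc j. 0 < ((-1)^i * s (J - {ls J ! i})) * fco e (ls J ! i) v)
                        \<and> \<not>(\<forall>i<Suc j. ((-1)^i * s (J - {ls J ! i})) * fco e (ls J ! i) v < 0)}"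
proof
  fix x1 assume "x1 \<in> Sset j K"
  then obtain x where x: "x 0 = x1" "wedge j x \<in> int_in (ext_power j) K \<union> int_in (ext_power j) (uminus ` K)"
    unfolding Sset_def by auto
  have ne: "{I::'n set. card I = j} \<noteq> {}" by (rule exists_card_subset[OF j(2)])
  define E where "E = (\<lambda>I::'n set. wedge j (\<lambda>a. e (ls I ! a)))"
  have "\<exists>\<sigma> c. \<sigma> \<noteq> 0 \<and> (\<forall>I\<in>{I::'n set. card I = j}. c I > 0) \<and>
          wedge j x = (\<Sum>I\<in>{I. card I = j}. (\<sigma> * (c I * s I)) *\<^sub>R E I)"
  proof (cases "wedge j x \<in> int_in (ext_power j) K")
    case True
    obtain c where c: "\<forall>I\<in>{I::'n set. card I = j}. c I > 0"
      "wedge j x = (\<Sum>I\<in>{I. card I = j}. c I *\<^sub>R (s I *\<^sub>R E I))"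
      using pos_repr[OF KK KW True ne] unfolding E_def by blast
    have "wedge j x = (\<Sum>I\<in>{I. card I = j}. (1 * (c I * s I)) *\<^sub>R E I)" using c(2) by simp
    thus ?thesis using c(1) by (intro exI[of _ 1] exI[of _ c]) simp
  next
    case False
    hence "wedge j x \<in> int_in (ext_power j) (uminus ` K)" using x(2) by simp
    hence m: "- wedge j x \<in> int_in (ext_power j) K" using iffD1[OF int_in_neg[OF subspace_ext[of j]]] by blast
    obtain c where c: "\<forall>I\<in>{I::'n set. card I = j}. c I > 0"
      "- wedge j x = (\<Sum>I\<in>{I. card I = j}. c I *\<^sub>R (s I *\<^sub>R E I))"
      using pos_repr[OF KK KW m ne] unfolding E_def by blast
    have "wedge j x = - (- wedge j x)" by simp
    also have "\<dots> = (\<Sum>I\<in>{I. card I = j}. ((-1) * (c I * s I)) *\<^sub>R E I)"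
      unfolding c(2) by (simp add: sum_negf[symmetric])
    finally show ?thesis using c(1) by (intro exI[of _ "-1"] exI[of _ c]) simp
  qed
  then obtain \<sigma> c where sc: "\<sigma> \<noteq> 0" "\<forall>I\<in>{I::'n set. card I = j}. c I > 0"
      "wedge j x = (\<Sum>I\<in>{I. card I = j}. (\<sigma> * (c I * s I)) *\<^sub>R E I)" by blast
  have id: "(\<Sum>i<Suc j. (-1)^i * fco e (ls J ! i) (x 0) * (\<sigma> * (c (J - {ls J ! i}) * s (J - {ls J ! i})))) = 0"
    by (rule laplace_identity[OF e j(1) J]) (use sc(3) in \<open>simp add: E_def\<close>)
  define t where "t = (\<lambda>i. ((-1)^i * s (J - {ls J ! i})) * fco e (ls J ! i) x1 * c (J - {ls J ! i}))"
  have "\<sigma> * (\<Sum>i<Suc j. t i) = (\<Sum>i<Suc j. (-1)^i * fco e (ls J ! i) (x 0) * (\<sigma> * (c (J - {ls J ! i}) * s (J - {ls J ! i}))))"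
    unfolding t_def sum_distrib_left x(1) by (rule sum.cong) (simp_all add: mult_ac)
  hence "\<sigma> * (\<Sum>i<Suc j. t i) = 0" using id by simp
  hence tsum: "(\<Sum>i<Suc j. t i) = 0" using sc(1) by simp
  have cp: "c (J - {ls J ! i}) > 0" if "i < Suc j" for i
  proof -
    have "ls J ! i \<in> J" using that J by (metis nth_mem length_sorted_list_of_set set_sorted_list_of_set finite)
    hence "card (J - {ls J ! i}) = j" using J by simp
    thus ?thesis using sc(2) by simp
  qed
  show "x1 \<in> {v. \<not>(\<forall>i<Suc j. 0 < ((-1)^i * s (J - {ls J ! i})) * fco e (ls J ! i) v)
                        \<and> \<not>(\<forall>i<Suc j. ((-1)^i * s (J - {ls J ! i})) * fco e (ls J ! i) v < 0)}"
  proof (intro CollectI conjI notI)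
    assume H: "\<forall>i<Suc j. 0 < ((-1)^i * s (J - {ls J ! i})) * fco e (ls J ! i) x1"
    have "0 < (\<Sum>i<Suc j. t i)"
      by (rule sum_pos) (use H cp in \<open>auto simp: t_def\<close>)
    thus False using tsum by simp
  next
    assume H: "\<forall>i<Suc j. ((-1)^i * s (J - {ls J ! i})) * fco e (ls J ! i) x1 < 0"
    have "0 < (\<Sum>i<Suc j. - t i)"
      by (rule sum_pos) (use H cp in \<open>auto simp: t_def mult_neg_pos\<close>)
    thus False using tsum by (simp add: sum_negf)
  qed
qed

lemma closed_C:
  fixes N :: nat
  assumes e: "is_basis e"
  shows "closed {v. \<not>(\<forall>i<N. 0 < \<tau> i * fco e (g i) v) \<and> \<not>(\<forall>i<N. \<tau> i * fco e (g i) v < 0)}"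
proof -
  have cont: "continuous_on UNIV (\<lambda>v. \<tau> i * fco e (g i) v)" for i
    using bounded_linear.continuous_on[OF fco_bl[OF e] continuous_on_id]
    by (intro continuous_on_mult continuous_on_const) simp
  have eq: "{v. \<not>(\<forall>i<N. 0 < \<tau> i * fco e (g i) v) \<and> \<not>(\<forall>i<N. \<tau> i * fco e (g i) v < 0)}
      = (\<Union>i\<in>{..<N}. {v. \<tau> i * fco e (g i) v \<le> 0}) \<inter> (\<Union>i\<in>{..<N}. {v. 0 \<le> \<tau> i * fco e (g i) v})"
    by (auto simp: not_less)
  show ?thesis unfolding eq
    by (intro closed_Int closed_UN ballI closed_Collect_le cont continuous_on_const) auto
qed




lemma find_J:
  fixes e :: "'n::{finite,linorder} \<Rightarrow> real^('n::{finite,linorder})"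
  assumes e: "is_basis e" and L: "subspace L" and dL: "Suc j \<le> dim L"
  shows "\<exists>J::'n set. card J = Suc j \<and> (\<forall>g. \<exists>z\<in>L. \<forall>k\<in>J. fco e k z = g k)"
proof -
  have inj: "inj e" and inde: "independent (range e)" using e unfolding is_basis_def by auto
  obtain BL where BL: "BL \<subseteq> L" "independent BL" "L \<subseteq> span BL" "card BL = dim L"
    using basis_exists[of L] by blast
  obtain S0 where S0: "S0 \<subseteq> BL" "card S0 = Suc j" "finite S0"
    using obtain_subset_with_card_n[of "Suc j" BL] dL BL(4) by metis
  have indS0: "independent S0" using independent_mono[OF BL(2) S0(1)] .
  obtain B where B: "S0 \<subseteq> B" "B \<subseteq> S0 \<union> range e" "independent B" "S0 \<union> range e \<subseteq> span B"
    using maximal_independent_subset_extend[of S0 "S0 \<union> range e"] indS0 by blast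
  have spanB: "span B = UNIV"
  proof -
    have "span (range e) \<subseteq> span B" using B(4) by (intro span_minimal subspace_span) auto
    thus ?thesis using basis_span[OF e] by auto
  qed
  have finB: "finite B" using independent_imp_finite[OF B(3)] .
  have cardB: "card B = CARD('n)"
  proof -
    have "card B = dim (span B)" using dim_span_eq_card_independent[OF B(3)] by simp
    also have "\<dots> = dim (span (range e))" using spanB basis_span[OF e] by simp
    also have "\<dots> = card (range e)" using dim_span_eq_card_independent[OF inde] by simp
    also have "\<dots> = CARD('n)" using card_image[OF inj] by simp
    finally show ?thesis .
  qed
  define M where "M = {k. e k \<in> B - S0}"
  have BS: "B - S0 = e ` M"
  proof
    show "B - S0 \<subseteq> e ` M"
    proof
      fix b assume b: "b \<in> B - S0"
      then obtain k where "b = e k" using B(2) by auto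
      thus "b \<in> e ` M" using b unfolding M_def by auto
    qed
    show "e ` M \<subseteq> B - S0" unfolding M_def by auto
  qed
  have "card (B - S0) = card B - card S0" using card_Diff_subset[OF S0(3) B(1)] .
  moreover have "card (e ` M) = card M" using card_image[of e M] inj by (simp add: inj_on_def inj_def)
  ultimately have cardM: "card M = CARD('n) - Suc j" using BS cardB S0(2) by simp
  have le: "Suc j \<le> CARD('n)" using card_mono[OF finB B(1)] S0(2) cardB by simp
  define J where "J = UNIV - M"
  have cardJ: "card J = Suc j"
    unfolding J_def using card_Diff_subset[of M UNIV] cardM le by simp
  have "\<forall>g. \<exists>z\<in>L. \<forall>k\<in>J. fco e k z = g k"
  proof
    fix g :: "'n \<Rightarrow> real"
    define t where "t = (\<Sum>k\<in>J. g k *\<^sub>R e k)"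
    have "t \<in> span (S0 \<union> (B - S0))" using spanB B(1) by (metis Un_Diff_cancel sup.absorb2 UNIV_I)
    then obtain s0 m where sm: "t = s0 + m" "s0 \<in> span S0" "m \<in> span (B - S0)"
      unfolding span_Un by blast
    have s0L: "s0 \<in> L" using sm(2) span_minimal[of S0 L] S0(1) BL(1) L by auto
    have "\<forall>k\<in>J. fco e k s0 = g k"
    proof
      fix k assume k: "k \<in> J"
      have lin: "linear (fco e k)" by (rule fco_linear[OF e])
      have m0: "fco e k m = 0"
      proof (rule linear_eq_0_on_span[OF lin _ sm(3)])
        fix b assume "b \<in> B - S0"
        then obtain k' where k': "k' \<in> M" "b = e k'" unfolding BS by auto
        have "k' \<noteq> k" using k k' unfolding J_def by auto
        thus "fco e k b = 0" using k' fco_basis[OF e] by simp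
      qed
      have "fco e k t = (\<Sum>k'\<in>J. g k' * fco e k (e k'))"
        unfolding t_def by (simp add: linear_sum[OF lin] linear_scale[OF lin])
      also have "\<dots> = (\<Sum>k'\<in>J. if k = k' then g k' else 0)"
        by (rule sum.cong) (simp_all add: fco_basis[OF e])
      also have "\<dots> = g k" using k by (simp add: sum.delta)
      finally have "fco e k t = g k" .
      moreover have "fco e k t = fco e k s0 + fco e k m" unfolding sm(1) by (rule linear_add[OF lin])
      ultimately show "fco e k s0 = g k" using m0 by simp
    qed
    thus "\<exists>z\<in>L. \<forall>k\<in>J. fco e k z = g k" using s0L by blast
  qed
  thus ?thesis using cardJ by blast
qed

theorem theorem5:
  fixes K :: "(real^('n::{finite,linorder} set)) set" and j :: nat
  assumes "2 \<le> j" and "j \<le> CARD('n)"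
    and "proper_cone_in (ext_power j) K"
    and "\<exists>K'. is_ext_basic_cone j K' \<and> K \<subseteq> K'"
    and "T_set j K \<noteq> {}"
  shows "cone_of_rank j (T_set j K)"
proof -
  have KW: "K \<subseteq> ext_power j" and cone: "cone K" and pt: "K \<inter> uminus ` K \<subseteq> {0}"
    using assms(3) unfolding proper_cone_in_def by auto
  obtain e s where e: "is_basis e" and sg: "\<forall>I. s I \<in> {1, -1}" and KK: "K \<subseteq> ext_basic_cone j e s"
    using assms(4) unfolding is_ext_basic_cone_def by blast
  have j0: "0 < j" "1 \<le> j" using assms(1) by auto
  have Sne: "Sset j K \<noteq> {}" using assms(5) unfolding T_eq by auto
  then obtain x1 where "x1 \<in> Sset j K" by auto
  then obtain x where x: "wedge j x \<in> int_in (ext_power j) K \<union> int_in (ext_power j) (uminus ` K)"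
    unfolding Sset_def by auto
  have closedT: "closed (T_set j K)" unfolding T_eq by simp
  have scaleT: "\<forall>v\<in>T_set j K. \<forall>\<alpha>::real. \<alpha> *\<^sub>R v \<in> T_set j K"
    unfolding T_eq
    using closure_scale_closed[of "Sset j K"] S_scale[OF cone j0(1)] assms(5) unfolding T_eq by blast
  have lowT: "\<exists>L. subspace L \<and> dim L = j \<and> L \<subseteq> T_set j K"
    using T_lower[OF cone pt j0(1) assms(2) x] subspace_span by blast
  have upT: "\<forall>L. subspace L \<and> L \<subseteq> T_set j K \<longrightarrow> dim L \<le> j"
  proof (intro allI impI)
    fix L :: "(real,'n) Finite_Cartesian_Product.vec set" assume L: "subspace L \<and> L \<subseteq> T_set j K"
    show "dim L \<le> j"
    proof (rule ccontr)
      assume "\<not> dim L \<le> j"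
      hence dL: "Suc j \<le> dim L" by simp
      obtain J :: "'n set" where J: "card J = Suc j" "\<forall>g. \<exists>z\<in>L. \<forall>k\<in>J. fco e k z = g k"
        using find_J[OF e _ dL] L by blast
      define \<tau> where "\<tau> = (\<lambda>i. (-1)^i * s (J - {ls J ! i}))"
      obtain z where z: "z \<in> L" "\<forall>k\<in>J. fco e k z = \<tau> (pos (ls J) k)"
        using J(2)[rule_format, of "\<lambda>k. \<tau> (pos (ls J) k)"] by blast
      have CARD: "j \<le> CARD('n)" by (rule assms(2))
      have TC: "T_set j K \<subseteq> {v. \<not>(\<forall>i<Suc j. 0 < \<tau> i * fco e (ls J ! i) v) \<and> \<not>(\<forall>i<Suc j. \<tau> i * fco e (ls J ! i) v < 0)}"
        unfolding T_eq \<tau>_def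
        by (rule closure_minimal[OF S_subset_C[OF e KK KW j0(2) CARD J(1)] closed_C[OF e]])
      have zT: "z \<in> T_set j K" using z(1) L by auto
      have "\<forall>i<Suc j. 0 < \<tau> i * fco e (ls J ! i) z"
      proof (intro allI impI)
        fix i assume i: "i < Suc j"
        have len: "length (ls J) = Suc j" "distinct (ls J)" using J(1) by auto
        have mem: "ls J ! i \<in> J" using i len by (metis nth_mem set_sorted_list_of_set finite)
        have "fco e (ls J ! i) z = \<tau> i" using z(2) mem pos_nth[OF len(2)] i len(1) by simp
        moreover have "\<tau> i * \<tau> i = 1"
        proof -
          have "s (J - {ls J ! i}) * s (J - {ls J ! i}) = 1" using sg by (metis insert_iff singletonD mult_1 mult_minus1 minus_minus)
          thus ?thesis unfolding \<tau>_def by (simp add: mult_ac power_mult_distrib[symmetric] flip: power_add mult_2)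
        qed
        ultimately show "0 < \<tau> i * fco e (ls J ! i) z" by simp
      qed
      thus False using TC zT by auto
    qed
  qed
  show ?thesis unfolding cone_of_rank_def using closedT scaleT lowT upT by blast
qed


end
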